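(* Let $k,l\geq 1$ be integers, $n=2^k$ and $m=2^l$. For the Ducci map $D:\mathbb{Z}_m^n\to\mathbb{Z}_m^n$, we have $L_m(n)=(l+1)2^{k-1}$ and $P_m(n)=1$.
   Context: For integers $m\ge 2$, $n\ge 2$, the Ducci function $D:\mathbb{Z}_m^n\to\mathbb{Z}_m^n$ is $D(x_1,\dots,x_n)=(x_1+x_2 \bmod m, x_2+x_3\bmod m,\dots,x_n+x_1\bmod m)$. For $\mathbf{u}\in\mathbb{Z}_m^n$, $Len(\mathbf{u})$ is the smallest integer $\alpha\ge 0$ such that there exists an integer $\beta\ge 1$ with $D^{\alpha+\beta}(\mathbf{u})=D^{\alpha}(\mathbf{u})$, and $Per(\mathbf{u})$ is the smallest integer $\beta\geq 1$ such that $D^{Len(\mathbf{u})+\beta}(\mathbf{u})=D^{Len(\mathbf{u})}(\mathbf{u})$. Define $L_m(n)=Len(0,0,\dots,0,1)$ and $P_m(n)=Per(0,0,\dots,0,1)$, where $(0,\dots,0,1)\in\mathbb{Z}_m^n$. *)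

theory Defs
  imports Main
begin

text \<open>Elements of Z_m^n are represented as functions nat => nat, where only the
  values at indices 0..n-1 matter (coordinate x_{i+1} is stored at index i);
  all vectors we build are canonical: entries in {0..<m} at indices < n and 0 elsewhere.\<close>

definition ducci :: "nat \<Rightarrow> nat \<Rightarrow> (nat \<Rightarrow> nat) \<Rightarrow> (nat \<Rightarrow> nat)" where
  "ducci m n x = (\<lambda>i. if i < n then (x i + x (Suc i mod n)) mod m else 0)"

definition Len :: "nat \<Rightarrow> nat \<Rightarrow> (nat \<Rightarrow> nat) \<Rightarrow> nat" where
  "Len m n u = (LEAST a. \<exists>b\<ge>1. (ducci m n ^^ (a + b)) u = (ducci m n ^^ a) u)"

definition Per :: "nat \<Rightarrow> nat \<Rightarrow> (nat \<Rightarrow> nat) \<Rightarrow> nat" where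
  "Per m n u = (LEAST b. b \<ge> 1 \<and>
      (ducci m n ^^ (Len m n u + b)) u = (ducci m n ^^ Len m n u) u)"

text \<open>The vector (0,...,0,1) in Z_m^n (m >= 2, so 1 mod m = 1).\<close>
definition e_last :: "nat \<Rightarrow> nat \<Rightarrow> nat" where
  "e_last n = (\<lambda>i. if i = n - 1 then 1 else 0)"

definition L_fun :: "nat \<Rightarrow> nat \<Rightarrow> nat" where
  "L_fun m n = Len m n (e_last n)"

definition P_fun :: "nat \<Rightarrow> nat \<Rightarrow> nat" where
  "P_fun m n = Per m n (e_last n)"

end

theory Submission
  imports Defs "HOL-Computational_Algebra.Polynomial"
begin

definition vec :: "nat \<Rightarrow> int poly \<Rightarrow> nat \<Rightarrow> int" where
  "vec n p i = (\<Sum>j\<le>degree p. if (i + j) mod n = 0 then coeff p j else 0)"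

lemma vec_le:
  assumes "degree p \<le> N"
  shows "vec n p i = (\<Sum>j\<le>N. if (i + j) mod n = 0 then coeff p j else 0)"
  unfolding vec_def
  by (rule sum.mono_neutral_left) (use assms in \<open>auto simp: coeff_eq_0\<close>)

lemma vec_add: "vec n (p + q) i = vec n p i + vec n q i"
proof -
  let ?N = "max (degree p) (degree q)"
  have "vec n (p + q) i = (\<Sum>j\<le>?N. if (i + j) mod n = 0 then coeff (p+q) j else 0)"
    by (rule vec_le) (simp add: degree_add_le)
  also have "\<dots> = (\<Sum>j\<le>?N. if (i + j) mod n = 0 then coeff p j else 0)
     + (\<Sum>j\<le>?N. if (i + j) mod n = 0 then coeff q j else 0)"
    by (simp add: sum.distrib[symmetric]) (rule sum.cong, simp, simp)
  also have "\<dots> = vec n p i + vec n q i"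
    by (simp add: vec_le[of p ?N] vec_le[of q ?N])
  finally show ?thesis .
qed

lemma vec_minus: "vec n (- p) i = - vec n p i"
  unfolding vec_def by (simp add: sum_negf[symmetric] if_distrib cong: if_cong)

lemma vec_diff: "vec n (p - q) i = vec n p i - vec n q i"
  using vec_add[of n p "-q" i] vec_minus[of n q i] by simp

lemma vec_zero[simp]: "vec n 0 i = 0"
  unfolding vec_def by (rule sum.neutral) simp

lemma vec_one: "vec n 1 i = (if i mod n = 0 then 1 else 0)"
  unfolding vec_def by simp

lemma vec_pC: "vec n (pCons 0 p) i = vec n p (Suc i)"
proof -
  have "vec n (pCons 0 p) i = (\<Sum>j\<le>Suc (degree p). if (i + j) mod n = 0 then coeff (pCons 0 p) j else 0)"
    by (rule vec_le) (simp add: degree_pCons_le)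
  also have "\<dots> = (\<Sum>j\<le>degree p. if (Suc i + j) mod n = 0 then coeff p j else 0)"
    by (subst sum.atMost_Suc_shift) (simp only: coeff_pCons_Suc coeff_pCons_0, simp)
  finally show ?thesis by (simp add: vec_def)
qed

lemma vec_X: "vec n ([:0,1:] * p) i = vec n p (Suc i)"
  by (simp add: vec_pC)

lemma vec_Xpow: "vec n ([:0,1:]^j * p) i = vec n p (i + j)"
proof (induction j arbitrary: i)
  case (Suc j)
  have "vec n ([:0,1:]^Suc j * p) i = vec n ([:0,1:] * ([:0,1:]^j * p)) i"
    by (simp only: power_Suc mult.assoc)
  also have "\<dots> = vec n p (i + Suc j)" by (simp only: vec_X Suc) simp
  finally show ?case .
qed simp

lemma vec_mod: "vec n p (i mod n) = vec n p i"
  unfolding vec_def by (simp add: mod_add_left_eq)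

lemma vec_per: "vec n p (i + n) = vec n p i"
  by (metis mod_add_self2 vec_mod)

lemma vec_E: "vec n (([:0,1:]^n - 1) * r) i = 0"
  using vec_Xpow[of n n r i] by (simp add: left_diff_distrib vec_diff vec_per)

lemma vec_2: "vec n (2 * p) i = 2 * vec n p i"
proof -
  have "vec n (2 * p) i = vec n (p + p) i" by (simp only: mult_2)
  then show ?thesis by (simp only: vec_add mult_2)
qed

lemma vec_2pow: "vec n (2^l * p) i = 2^l * vec n p i"
proof (induction l)
  case (Suc l)
  have "vec n (2^Suc l * p) i = vec n (2 * (2^l * p)) i" by (simp only: power_Suc mult.assoc)
  also have "\<dots> = 2^Suc l * vec n p i" by (simp only: vec_2 Suc) simp
  finally show ?case .
qed simp

lemma vec_y: "vec n ([:1,1:] * p) i = vec n p i + vec n p (Suc i)"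
proof -
  have "[:1,1:] * p = p + [:0,1:] * p" by simp
  then show ?thesis by (simp add: vec_add vec_pC)
qed

lemma vec_sum: "vec n (\<Sum>j<(N::nat). f j) i = (\<Sum>j<N. vec n (f j) i)"
  by (induction N arbitrary: f) (auto simp: vec_add)

definition ones :: "nat \<Rightarrow> int poly" where "ones N = (\<Sum>j<N. [:0,1:]^j)"

lemma vec_ones0: assumes "n \<ge> 1" shows "vec n (ones n) 0 = 1"
proof -
  have "vec n (ones n) 0 = (\<Sum>j<n. vec n ([:0,1:]^j * 1) 0)"
    by (simp add: ones_def vec_sum)
  also have "\<dots> = (\<Sum>j<n. if j = 0 then 1 else 0)"
    by (rule sum.cong) (auto simp: vec_Xpow[of n _ 1, simplified] vec_one)
  also have "\<dots> = 1" using assms by simp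
  finally show ?thesis .
qed



lemma formula:
  fixes P G E :: "'a::comm_ring_1"
  assumes PP: "P * P = 2 * P + E"
  shows "\<exists>R. (P + 2*G)^Suc j = 2^j * P * ((1+G)^Suc j - G^Suc j) + 2^Suc j * G^Suc j + E * R"
proof (induction j)
  case 0
  show ?case by (rule exI[of _ 0]) (simp add: algebra_simps)
next
  case (Suc j)
  then obtain R where R: "(P + 2*G)^Suc j = 2^j * P * ((1+G)^Suc j - G^Suc j) + 2^Suc j * G^Suc j + E * R" by blast
  define a where "a = G^Suc j"
  define b where "b = (1+G)^Suc j"
  define c where "c = (2::'a)^j"
  have R': "(P + 2*G)^Suc j = c * P * (b - a) + 2 * c * a + E * R"
    using R by (simp add: a_def b_def c_def)
  have "(P + 2*G)^Suc (Suc j) = (P + 2*G) * (c * P * (b - a) + 2 * c * a + E * R)"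
    by (simp only: power_Suc[of "P + 2*G" "Suc j"] R')
  also have "\<dots> = 2 * c * P * ((1+G)*b - G*a) + 2 * 2 * c * (G*a) + E * (c * (b - a) + (P + 2*G) * R)"
  proof -
    have "(P + 2*G) * (c * P * (b - a) + 2 * c * a + E * R) - (2 * c * P * ((1+G)*b - G*a) + 2 * 2 * c * (G*a) + E * (c * (b - a) + (P + 2*G) * R))
       = (P * P - (2 * P + E)) * (c * (b - a))" by (simp add: algebra_simps)
    then show ?thesis using PP by simp
  qed
  finally show ?case
    by (intro exI[of _ "c * (b - a) + (P + 2*G) * R"]) (simp add: a_def b_def c_def mult.assoc)
qed

abbreviation yy :: "int poly" where "yy \<equiv> [:1,1:]"
abbreviation XX :: "int poly" where "XX \<equiv> [:0,1:]"

lemma Ypow: "\<exists>G. yy^(2^k) = 1 + XX^(2^k) + 2*G"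
proof (induction k)
  case 0
  show ?case by (rule exI[of _ 0]) (simp add: one_pCons)
next
  case (Suc k)
  then obtain G where G: "yy^(2^k) = 1 + XX^(2^k) + 2*G" by blast
  define Z where "Z = XX^(2^k)"
  have "yy^(2^Suc k) = (yy^(2^k))^2" by (simp add: power_mult[symmetric] mult.commute)
  also have "\<dots> = (1 + Z + 2*G)^2" using G Z_def by simp
  also have "\<dots> = 1 + Z^2 + 2*(Z + 2*G + 2*G*Z + 2*G^2)" by algebra
  also have "Z^2 = XX^(2^Suc k)" by (simp add: Z_def power_mult[symmetric] mult.commute)
  finally show ?case by blast
qed

lemma ones_add: "ones (M + N) = ones M + XX^M * ones N"
  by (induction N) (simp_all add: ones_def algebra_simps power_add)

lemma ones_double: "ones (N + N) = ones N * (1 + XX^N)"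
  by (simp add: ones_add algebra_simps)

lemma Ones: "\<exists>s. yy^(2^k - 1) = ones (2^k) + 2*s"
proof (induction k)
  case 0
  show ?case by (rule exI[of _ 0]) (simp add: ones_def)
next
  case (Suc k)
  then obtain s where s: "yy^(2^k - 1) = ones (2^k) + 2*s" by blast
  obtain G where G: "yy^(2^k) = 1 + XX^(2^k) + 2*G" using Ypow by blast
  have e: "(2::nat)^Suc k - 1 = (2^k - 1) + 2^k" by simp
  have "yy^(2^Suc k - 1) = yy^(2^k - 1) * yy^(2^k)" by (simp only: e power_add)
  also have "\<dots> = (ones (2^k) + 2*s) * (1 + XX^(2^k) + 2*G)" using s G by simp
  also have "\<dots> = ones (2^k) * (1 + XX^(2^k)) + 2 * (ones (2^k) * G + s * (1 + XX^(2^k) + 2*G))"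
    by algebra
  also have "ones (2^k) * (1 + XX^(2^k)) = ones (2^Suc k)"
    using ones_double[of "2^k"] by (simp add: mult_2)
  finally show ?case by blast
qed

lemma XO: "XX * ones N = ones N + (XX^N - 1)"
proof -
  have "XX * ones N = (\<Sum>j<N. XX^Suc j)" by (simp add: ones_def sum_distrib_left)
  moreover have "ones (Suc N) = 1 + (\<Sum>j<N. XX^Suc j)"
    unfolding ones_def by (subst sum.lessThan_Suc_shift) simp
  moreover have "ones (Suc N) = ones N + XX^N" by (simp add: ones_def)
  ultimately show ?thesis by (simp add: algebra_simps)
qed

lemma qO: "\<exists>r. q * ones N = [:poly q 1:] * ones N + (XX^N - 1) * r"
proof (induction q)
  case (pCons a p)
  then obtain r where r: "p * ones N = [:poly p 1:] * ones N + (XX^N - 1) * r" by blast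
  have "pCons a p = [:a:] + XX * p" by simp
  then have "pCons a p * ones N = [:a:] * ones N + XX * (p * ones N)" by (simp add: algebra_simps)
  also have "\<dots> = [:a:] * ones N + [:poly p 1:] * (XX * ones N) + (XX^N - 1) * (XX * r)"
    using r by (simp add: algebra_simps)
  also have "\<dots> = [:a:] * ones N + [:poly p 1:] * ones N + (XX^N - 1) * ([:poly p 1:] + XX * r)"
  proof -
    define Ow where "Ow = ones N"
    define E where "E = XX^N - 1"
    define c where "c = [:poly p 1:]"
    have h: "XX * Ow = Ow + E" unfolding Ow_def E_def by (rule XO)
    show ?thesis unfolding Ow_def[symmetric] E_def[symmetric] c_def[symmetric]
      using h by algebra
  qed
  also have "[:a:] * ones N + [:poly p 1:] * ones N = [:poly (pCons a p) 1:] * ones N"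
    by (simp add: smult_add_left)
  finally show ?case by blast
qed simp



lemma vec_smult: "vec n (smult c p) i = c * vec n p i"
proof -
  have "vec n (smult c p) i = (\<Sum>j\<le>degree p. if (i + j) mod n = 0 then coeff (smult c p) j else 0)"
    by (rule vec_le) (rule degree_smult_le)
  also have "\<dots> = c * vec n p i"
    unfolding vec_def sum_distrib_left by (rule sum.cong) auto
  finally show ?thesis .
qed

lemma PP_lemma: "(1 + XX^h) * (1 + XX^h) = 2 * (1 + XX^h) + (XX^(h+h) - 1)"
proof -
  define Z where "Z = XX^h"
  have "XX^(h+h) = Z * Z" by (simp add: Z_def power_add)
  moreover have "(1 + Z) * (1 + Z) = 2 * (1 + Z) + (Z * Z - 1)" by algebra
  ultimately show ?thesis by (simp add: Z_def)
qed

lemma polyU: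
  assumes "k \<ge> 1"
  shows "\<exists>Q R. yy^((l+1)*2^(k-1)) * XX = 2^l * Q + (XX^(2^k) - 1) * R"
proof -
  define h where "h = (2::nat)^(k-1)"
  have n: "(2::nat)^k = h + h" using assms unfolding h_def
    by (metis Suc_diff_le diff_Suc_1 mult_2 power_Suc)
  obtain G where G: "yy^h = 1 + XX^h + 2*G" using Ypow[of "k-1"] h_def by blast
  define P where "P = 1 + XX^h"
  define E where "E = XX^(2^k) - (1::int poly)"
  have PP: "P * P = 2 * P + E" unfolding P_def E_def n by (rule PP_lemma)
  obtain R where R: "(P + 2*G)^Suc l = 2^l * P * ((1+G)^Suc l - G^Suc l) + 2^Suc l * G^Suc l + E * R"
    using formula[OF PP] by blast
  have e: "(l+1)*h = h * Suc l" by simp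
  have "yy^((l+1)*h) = (yy^h)^Suc l" by (simp only: e power_mult)
  also have "\<dots> = (P + 2*G)^Suc l" by (simp only: G P_def)
  finally have "yy^((l+1)*h) * XX = 2^l * (P * ((1+G)^Suc l - G^Suc l) * XX + 2 * G^Suc l * XX) + E * (R * XX)"
    using R by (simp add: algebra_simps)
  then show ?thesis unfolding h_def E_def by blast
qed

lemma polyL:
  assumes "k \<ge> 1" "l \<ge> 1"
  shows "\<exists>c Q R. odd c \<and> yy^((l+1)*2^(k-1) - 1) * XX
      = 2^(l-1) * smult c (ones (2^k)) + 2^l * Q + (XX^(2^k) - 1) * R"
proof -
  define h where "h = (2::nat)^(k-1)"
  have h1: "h \<ge> 1" unfolding h_def by simp
  have n: "(2::nat)^k = h + h" using assms unfolding h_def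
    by (metis Suc_diff_le diff_Suc_1 mult_2 power_Suc)
  obtain j where lj: "l = Suc j" using assms by (cases l) auto
  obtain G where G: "yy^h = 1 + XX^h + 2*G" using Ypow[of "k-1"] h_def by blast
  define P where "P = 1 + XX^h"
  define E where "E = XX^(2^k) - (1::int poly)"
  define F where "F = (1+G)^Suc j - G^Suc j"
  define W where "W = yy^(h-1)"
  define On where "On = ones (2^k)"
  have PP: "P * P = 2 * P + E" unfolding P_def E_def n by (rule PP_lemma)
  obtain R where R: "(P + 2*G)^Suc j = 2^j * P * F + 2^Suc j * G^Suc j + E * R"
    using formula[OF PP] F_def by blast
  obtain s where s: "yy^(2^k - 1) = On + 2*s" using Ones[of k] On_def by blast
  have "yy^(2^k - 1) = yy^h * W" unfolding W_def n using h1
    by (simp add: power_add[symmetric])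
  then have PW: "P * W = On + 2 * (s - G * W)" using s G P_def by (simp add: algebra_simps)
  obtain r where r: "F * XX * On = [:poly (F * XX) 1:] * On + E * r"
    using qO[of "F * XX" "2^k"] On_def E_def by blast
  define c where "c = poly F 1"
  have c: "poly (F * XX) 1 = c" by (simp add: c_def)
  have "yy^((l+1)*h - 1) = yy^(l*h) * W" unfolding W_def using h1
    by (simp add: power_add[symmetric] algebra_simps)
  also have "yy^(l*h) = (P + 2*G)^Suc j"
  proof -
    have e: "l*h = h * Suc j" by (simp add: lj)
    show ?thesis by (simp only: e power_mult G P_def)
  qed
  finally have Y: "yy^((l+1)*h - 1) = (2^j * P * F + 2^Suc j * G^Suc j + E * R) * W"
    using R by simp
  define t where "t = (2::int poly)^j"
  define Gl where "Gl = G^Suc j"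
  define C where "C = [:c:]"
  have Y': "yy^((l+1)*h - 1) * XX = (t * P * F + 2 * t * Gl + E * R) * W * XX"
    using Y by (simp add: t_def Gl_def)
  have r': "F * XX * On = C * On + E * r" using r c C_def by simp
  have main: "yy^((l+1)*h - 1) * XX = t * (C * On) + 2 * t * (F * XX * (s - G * W) + Gl * W * XX)
     + E * (t * r + R * W * XX)"
    unfolding Y' using PW r' by algebra
  have "odd c" unfolding c_def F_def
    by (cases "even (poly G 1)") (auto simp: even_diff)
  moreover have "C * On = smult c (ones (2^k))" by (simp add: C_def On_def)
  moreover have "t = 2^(l-1)" "2 * t = 2^l" by (simp_all add: t_def lj)
  ultimately have "odd c \<and> yy^((l+1)*2^(k-1) - 1) * XX
      = 2^(l-1) * smult c (ones (2^k)) + 2^l * (F * XX * (s - G * W) + Gl * W * XX) + (XX^(2^k) - 1) * (t * r + R * W * XX)"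
    using main unfolding h_def E_def by metis
  then show ?thesis by blast
qed



lemma nat_mod_add:
  assumes "(m::nat) > 0"
  shows "(nat (a mod int m) + nat (b mod int m)) mod m = nat ((a + b) mod int m)"
proof -
  have "nat (a mod int m) + nat (b mod int m) = nat (a mod int m + b mod int m)"
    using assms by (simp add: nat_add_distrib)
  then have "(nat (a mod int m) + nat (b mod int m)) mod m = nat ((a mod int m + b mod int m) mod int m)"
    using assms by (simp add: nat_mod_distrib)
  also have "(a mod int m + b mod int m) mod int m = (a + b) mod int m" by (simp add: mod_add_eq)
  finally show ?thesis .
qed

lemma state:
  assumes "n \<ge> 2" "m \<ge> 2"
  shows "(ducci m n ^^ t) (e_last n) = (\<lambda>i. if i < n then nat (vec n (yy^t * XX) i mod int m) else 0)"
proof (induction t)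
  case 0
  show ?case
  proof (rule ext)
    fix i
    have v: "vec n XX i = (if Suc i mod n = 0 then 1 else 0)"
      using vec_X[of n 1 i] by (simp add: vec_one)
    have "i < n \<Longrightarrow> (Suc i mod n = 0) = (i = n - 1)"
    proof -
      assume "i < n"
      then show ?thesis by (cases "Suc i < n") auto
    qed
    then show "(ducci m n ^^ 0) (e_last n) i = (if i < n then nat (vec n (yy^0 * XX) i mod int m) else 0)"
      using assms v by (auto simp: e_last_def)
  qed
next
  case (Suc t)
  show ?case
  proof (rule ext)
    fix i
    define p where "p = yy^t * XX"
    have yp: "yy^Suc t * XX = yy * p" by (simp add: p_def mult.assoc)
    have n0: "n > 0" using assms by simp
    have "(ducci m n ^^ Suc t) (e_last n) = ducci m n ((ducci m n ^^ t) (e_last n))" by simp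
    also have "\<dots> = ducci m n (\<lambda>i. if i < n then nat (vec n p i mod int m) else 0)"
      using Suc by (simp only: p_def)
    finally have "(ducci m n ^^ Suc t) (e_last n) i = (if i < n then (nat (vec n p i mod int m) + nat (vec n p (Suc i mod n) mod int m)) mod m else 0)"
      using n0 by (simp add: ducci_def)
    also have "\<dots> = (if i < n then nat (vec n (yy^Suc t * XX) i mod int m) else 0)"
    proof -
      have "vec n (yy^Suc t * XX) i = vec n p i + vec n p (Suc i)" by (simp only: yp vec_y)
      then show ?thesis using assms by (simp add: vec_mod nat_mod_add)
    qed
    finally show "(ducci m n ^^ Suc t) (e_last n) i = (if i < n then nat (vec n (yy^Suc t * XX) i mod int m) else 0)" .
  qed
qed



lemma ducci_zero: "ducci m n (\<lambda>i. 0) = (\<lambda>i. 0)"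
  by (simp add: ducci_def fun_eq_iff)

lemma ducci_zero_pow: "(ducci m n ^^ j) (\<lambda>i. 0) = (\<lambda>i. 0)"
  by (induction j) (simp_all add: ducci_zero)

lemma len_per_abstract:
  fixes f :: "'a \<Rightarrow> 'a"
  assumes fz: "f z = z" and T: "(f^^T) u = z" and T1: "(f^^(T-1)) u \<noteq> z" and T0: "T \<ge> 1"
  shows "(LEAST a. \<exists>b\<ge>1. (f ^^ (a + b)) u = (f ^^ a) u) = T"
proof -
  have zp: "(f^^j) z = z" for j by (induction j) (simp_all add: fz)
  have after: "(f^^x) u = z" if "x \<ge> T" for x
  proof -
    have "(f^^x) u = (f^^(x - T)) ((f^^T) u)" using that
      by (metis funpow_add le_add_diff_inverse2 comp_apply)
    then show ?thesis using T zp by simp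
  qed
  show ?thesis
  proof (rule Least_equality)
    show "\<exists>b\<ge>1. (f ^^ (T + b)) u = (f ^^ T) u"
      using after fz by (intro exI[of _ 1]) simp
  next
    fix a assume "\<exists>b\<ge>1. (f ^^ (a + b)) u = (f ^^ a) u"
    then obtain b where b1: "b \<ge> 1" and ab: "(f ^^ (a + b)) u = (f ^^ a) u" by blast
    have per: "(f ^^ (a + c*b)) u = (f ^^ a) u" for c
    proof (induction c)
      case (Suc c)
      have e1: "a + Suc c * b = c*b + (a+b)" by simp
      have "(f ^^ (a + Suc c * b)) u = (f ^^ (c*b)) ((f ^^ (a + b)) u)"
        by (simp only: e1 funpow_add comp_apply)
      also have "\<dots> = (f ^^ (c*b)) ((f ^^ a) u)" using ab by simp
      also have "\<dots> = (f ^^ (c*b + a)) u" by (simp only: funpow_add comp_apply)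
      also have "\<dots> = (f ^^ (a + c*b)) u" by (simp only: add.commute)
      finally show ?case using Suc by simp
    qed simp
    show "T \<le> a"
    proof (rule ccontr)
      assume "\<not> T \<le> a"
      have "T*1 \<le> T*b" using b1 by (rule mult_le_mono2)
      then have "a + T*b \<ge> T" by linarith
      then have "(f ^^ a) u = z" using per[of T] after by simp
      moreover have "(f^^(T-1)) u = (f^^(T - 1 - a)) ((f ^^ a) u)"
        using \<open>\<not> T \<le> a\<close> by (metis funpow_add le_add_diff_inverse2 comp_apply not_le less_Suc_eq_le Suc_diff_1 T0 less_le_trans zero_less_one)
      ultimately show False using T1 zp by simp
    qed
  qed
qed

theorem theorem1p2:
  fixes k l :: nat
  assumes "k \<ge> 1" and "l \<ge> 1"
  shows "L_fun (2 ^ l) (2 ^ k) = (l + 1) * 2 ^ (k - 1)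
       \<and> P_fun (2 ^ l) (2 ^ k) = 1"
proof -
  define n where "n = (2::nat)^k"
  define m where "m = (2::nat)^l"
  define T where "T = (l + 1) * 2 ^ (k - 1)"
  define f where "f = ducci m n"
  define u where "u = e_last n"
  have n2: "n \<ge> 2" unfolding n_def using assms
    by (metis One_nat_def power_increasing power_one_right Suc_1 le_SucI le_refl)
  have m2: "m \<ge> 2" unfolding m_def using assms
    by (metis One_nat_def power_increasing power_one_right Suc_1 le_SucI le_refl)
  have "(2::nat)^(k-1) \<ge> 1" by simp
  then have T1: "T \<ge> 1" unfolding T_def by (metis le_trans mult_le_mono1 Suc_le_mono le_add2 One_nat_def Suc_eq_plus1 mult_1)
  have Z: "(f^^T) u = (\<lambda>i. 0)"
  proof -
    obtain Q R where QR: "yy^T * XX = 2^l * Q + (XX^n - 1) * R"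
      using polyU[OF assms(1), of l] unfolding T_def n_def by blast
    have "vec n (yy^T * XX) i mod int m = 0" for i
    proof -
      have "vec n (yy^T * XX) i = 2^l * vec n Q i" by (simp only: QR vec_add vec_2pow vec_E add_0_right)
      then show ?thesis by (simp add: m_def)
    qed
    then show ?thesis unfolding f_def u_def using state[OF n2 m2, of T] by auto
  qed
  have NZ: "(f^^(T-1)) u \<noteq> (\<lambda>i. 0)"
  proof
    assume H: "(f^^(T-1)) u = (\<lambda>i. 0)"
    obtain c Q R where cQR: "odd c" "yy^(T - 1) * XX = 2^(l-1) * smult c (ones n) + 2^l * Q + (XX^n - 1) * R"
      using polyL[OF assms] unfolding T_def n_def by blast
    have v: "vec n (yy^(T - 1) * XX) 0 = 2^(l-1) * c + 2^l * vec n Q 0"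
    proof -
      have "vec n (yy^(T - 1) * XX) 0 = 2^(l-1) * (c * vec n (ones n) 0) + 2^l * vec n Q 0"
        by (simp only: cQR vec_add vec_2pow vec_E vec_smult add_0_right)
      then show ?thesis using n2 by (simp add: vec_ones0)
    qed
    have "nat (vec n (yy^(T - 1) * XX) 0 mod int m) = 0"
      using H state[OF n2 m2, of "T-1"] n2 unfolding f_def u_def by (metis not_numeral_le_zero gr0I)
    moreover have "vec n (yy^(T - 1) * XX) 0 mod int m \<ge> 0" using m2 by simp
    ultimately have "vec n (yy^(T - 1) * XX) 0 mod int m = 0" by linarith
    then have "(2::int)^l dvd 2^(l-1) * c + 2^l * vec n Q 0" using v m_def by (simp add: dvd_eq_mod_eq_0)
    then have "(2::int)^l dvd 2^(l-1) * c" by (simp add: dvd_add_left_iff)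
    moreover have "(2::int)^l = 2^(l-1) * 2" using assms by (metis Suc_diff_1 power_Suc2 not_one_le_zero not_gr0)
    ultimately have "(2::int) dvd c" by simp
    then show False using cQR by simp
  qed
  have fz: "f (\<lambda>i. 0) = (\<lambda>i. 0)" unfolding f_def by (rule ducci_zero)
  have L: "Len m n u = T"
    unfolding Len_def f_def[symmetric] by (rule len_per_abstract[OF fz Z NZ T1])
  have P: "Per m n u = 1"
    unfolding Per_def L f_def[symmetric]
  proof (rule Least_equality)
    show "1 \<le> (1::nat) \<and> (f ^^ (T + 1)) u = (f ^^ T) u"
      using Z fz by (simp add: funpow_swap1)
  qed simp
  show ?thesis using L P unfolding L_fun_def P_fun_def n_def m_def u_def T_def by simp
qed


end
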